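(* Consider the economy without knowledge synergies and assume the abundance condition (A). Then for every $\boldsymbol m\in[0,1]^2$ an equilibrium exists, every equilibrium maximizes total output over feasible allocations, and in every equilibrium $r^*=F(\boldsymbol m)$ and $w^*=\max\{\tilde w_s,\tilde w_b,\tilde w_t\}$. Moreover, with these prices the following allocations form an equilibrium: if $\boldsymbol m\in\tilde R_s$: $\alpha_s^*=1$, $\mu_s^*=\mu$; if $\boldsymbol m\in\tilde R_b$: $\alpha_b^*=1$, $\mu_b^*=n(\boldsymbol m)$, $\mu_s^*=\mu-\mu_b^*$; if $\boldsymbol m\in\tilde R_t$: $\alpha_t^*=1$, $\mu_t^*=1/n(\boldsymbol h)$, $\mu_s^*=\mu-\mu_t^*$.
   Context: Fix a cumulative distribution function $F$ on $[0,1]^2$ with a density $f$ that has full support on $[0,1]^2$, $c\in(0,1)$, human knowledge $\boldsymbol h\in(0,1)^2$ (unit mass of humans, one unit of time each), and a mass $\mu>0$ of machines with knowledge $\boldsymbol m\in[0,1]^2$ (one unit of time each). Write $\boldsymbol x\wedge\boldsymbol y=(\min\{x_1,y_1\},\min\{x_2,y_2\})$, $F(\boldsymbol m\oplus\boldsymbol h):=F(\boldsymbol m)+F(\boldsymbol h)-F(\boldsymbol m\wedge\boldsymbol h)$ (the probability that the human or the machine can solve a problem on its own), and for $F(\boldsymbol x)<1$, $n(\boldsymbol x)=\frac1{c(1-F(\boldsymbol x))}$. Without synergies, given wage $w\ge0$ and rental $r\ge0$, the firm types and profits are: single-layer non-automated $F(\boldsymbol h)-w$; single-layer automated $F(\boldsymbol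 m)-r$; bottom-automated $b$ (one human solver, $n(\boldsymbol m)$ machine workers; available when $F(\boldsymbol m)<1$) $\Pi_b=n(\boldsymbol m)[F(\boldsymbol m\oplus\boldsymbol h)-r]-w$; top-automated $t$ (one machine solver, $n(\boldsymbol h)$ human workers) $\Pi_t=n(\boldsymbol h)[F(\boldsymbol m\oplus\boldsymbol h)-w]-r$. A feasible allocation is $(\alpha_s,\alpha_b,\alpha_t,\mu_s,\mu_b,\mu_t)\ge0$ with $\mu_b=\alpha_bn(\boldsymbol m)$, $\mu_t=\alpha_t/n(\boldsymbol h)$, $\alpha_s+\alpha_b+\alpha_t=1$, $\mu_s+\mu_b+\mu_t=\mu$; total output $Y=\alpha_bn(\boldsymbol m)F(\boldsymbol m\oplus\boldsymbol h)+\alpha_tF(\boldsymbol m\oplus\boldsymbol h)+\alpha_sF(\boldsymbol h)+\mu_sF(\boldsymbol m)$. An equilibrium is a feasible allocation with prices $(w,r)\ge0$ such that all firm types have nonpositive profit and types used with positive mass earn zero profit. Define $\tilde w_s=F(\boldsymbol h)$, $\tilde w_b=n(\boldsymbol m)(F(\boldsymbol m\oplus\boldsymbol h)-F(\boldsymbol m))$ (with $\tilde w_b:=0$ if $F(\boldsymbol m)=1$), $\tilde w_t=F(\boldsymbol m\oplus\boldsymbol h)-F(\boldsymbol m)/n(\boldsymbol h)$; $\tilde R_s=\{\boldsymbol m:\tilde w_s\ge\max\{\tilde w_b,\tilde w_t\}\}$, $\tilde R_b=\{\boldsymbol m:\tilde w_b>\max\{\tilde w_s,\tilde w_t\}\}$,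 $\tilde R_t=[0,1]^2\setminus(\tilde R_s\cup\tilde R_b)$. Abundance condition (A): $\mu>\max\Big\{\frac1{c(1-F(1,h_2))},\frac1{c(1-F(h_1,1))}\Big\}$. *)

theory Defs
  imports "HOL-Analysis.Analysis"
begin

type_synonym pt = "real \<times> real"

definition unit_sq :: "pt set" where "unit_sq = cbox (0,0) (1,1)"
definition open_unit_sq :: "pt set" where "open_unit_sq = box (0,0) (1,1)"

definition cdf_with_full_support_density :: "(pt \<Rightarrow> real) \<Rightarrow> (pt \<Rightarrow> real) \<Rightarrow> bool" where
  "cdf_with_full_support_density F f \<longleftrightarrow>
     (\<forall>x\<in>unit_sq. 0 \<le> f x) \<and>
     (\<forall>x\<in>unit_sq. (f has_integral F x) (cbox (0,0) x)) \<and>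
     F (1,1) = 1 \<and>
     (\<forall>x\<in>unit_sq. \<forall>e>0. integral (cball x e \<inter> unit_sq) f > 0)"

definition meet :: "pt \<Rightarrow> pt \<Rightarrow> pt" where
  "meet x y = (min (fst x) (fst y), min (snd x) (snd y))"

definition Fplus :: "(pt \<Rightarrow> real) \<Rightarrow> pt \<Rightarrow> pt \<Rightarrow> real" where
  "Fplus F m h = F m + F h - F (meet m h)"

text \<open>n(x) = 1/(c(1-F x)), used only where F x < 1.\<close>
definition nn :: "(pt \<Rightarrow> real) \<Rightarrow> real \<Rightarrow> pt \<Rightarrow> real" where
  "nn F c x = 1 / (c * (1 - F x))"

definition profit_sh :: "(pt \<Rightarrow> real) \<Rightarrow> pt \<Rightarrow> real \<Rightarrow> real" where
  "profit_sh F h w = F h - w"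
definition profit_sm :: "(pt \<Rightarrow> real) \<Rightarrow> pt \<Rightarrow> real \<Rightarrow> real" where
  "profit_sm F m r = F m - r"
definition profit_b :: "(pt \<Rightarrow> real) \<Rightarrow> real \<Rightarrow> pt \<Rightarrow> pt \<Rightarrow> real \<Rightarrow> real \<Rightarrow> real" where
  "profit_b F c h m w r = nn F c m * (Fplus F m h - r) - w"
definition profit_t :: "(pt \<Rightarrow> real) \<Rightarrow> real \<Rightarrow> pt \<Rightarrow> pt \<Rightarrow> real \<Rightarrow> real \<Rightarrow> real" where
  "profit_t F c h m w r = nn F c h * (Fplus F m h - w) - r"

record alloc =
  a_s :: real
  a_b :: real
  a_t :: real
  m_s :: real
  m_b :: real
  m_t :: real

definition feasible :: "(pt \<Rightarrow> real) \<Rightarrow> real \<Rightarrow> pt \<Rightarrow> real \<Rightarrow> pt \<Rightarrow> alloc \<Rightarrow> bool" where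
  "feasible F c h \<mu> m A \<longleftrightarrow>
     a_s A \<ge> 0 \<and> a_b A \<ge> 0 \<and> a_t A \<ge> 0 \<and> m_s A \<ge> 0 \<and> m_b A \<ge> 0 \<and> m_t A \<ge> 0 \<and>
     (F m = 1 \<longrightarrow> a_b A = 0) \<and>
     m_b A = a_b A * nn F c m \<and>
     m_t A = a_t A / nn F c h \<and>
     a_s A + a_b A + a_t A = 1 \<and>
     m_s A + m_b A + m_t A = \<mu>"

definition total_output :: "(pt \<Rightarrow> real) \<Rightarrow> real \<Rightarrow> pt \<Rightarrow> pt \<Rightarrow> alloc \<Rightarrow> real" where
  "total_output F c h m A =
     a_b A * nn F c m * Fplus F m h + a_t A * Fplus F m h + a_s A * F h + m_s A * F m"

definition equilibrium ::
  "(pt \<Rightarrow> real) \<Rightarrow> real \<Rightarrow> pt \<Rightarrow> real \<Rightarrow> pt \<Rightarrow> alloc \<Rightarrow> real \<Rightarrow> real \<Rightarrow> bool" where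
  "equilibrium F c h \<mu> m A w r \<longleftrightarrow>
     feasible F c h \<mu> m A \<and> w \<ge> 0 \<and> r \<ge> 0 \<and>
     profit_sh F h w \<le> 0 \<and> profit_sm F m r \<le> 0 \<and>
     (F m < 1 \<longrightarrow> profit_b F c h m w r \<le> 0) \<and> profit_t F c h m w r \<le> 0 \<and>
     (a_s A > 0 \<longrightarrow> profit_sh F h w = 0) \<and>
     (m_s A > 0 \<longrightarrow> profit_sm F m r = 0) \<and>
     (a_b A > 0 \<longrightarrow> profit_b F c h m w r = 0) \<and>
     (a_t A > 0 \<longrightarrow> profit_t F c h m w r = 0)"

definition wt_s :: "(pt \<Rightarrow> real) \<Rightarrow> pt \<Rightarrow> real" where
  "wt_s F h = F h"
definition wt_b :: "(pt \<Rightarrow> real) \<Rightarrow> real \<Rightarrow> pt \<Rightarrow> pt \<Rightarrow> real" where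
  "wt_b F c h m = (if F m = 1 then 0 else nn F c m * (Fplus F m h - F m))"
definition wt_t :: "(pt \<Rightarrow> real) \<Rightarrow> real \<Rightarrow> pt \<Rightarrow> pt \<Rightarrow> real" where
  "wt_t F c h m = Fplus F m h - F m / nn F c h"

definition R_s :: "(pt \<Rightarrow> real) \<Rightarrow> real \<Rightarrow> pt \<Rightarrow> pt set" where
  "R_s F c h = {m \<in> unit_sq. wt_s F h \<ge> max (wt_b F c h m) (wt_t F c h m)}"
definition R_b :: "(pt \<Rightarrow> real) \<Rightarrow> real \<Rightarrow> pt \<Rightarrow> pt set" where
  "R_b F c h = {m \<in> unit_sq. wt_b F c h m > max (wt_s F h) (wt_t F c h m)}"
definition R_t :: "(pt \<Rightarrow> real) \<Rightarrow> real \<Rightarrow> pt \<Rightarrow> pt set" where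
  "R_t F c h = unit_sq - (R_s F c h \<union> R_b F c h)"

definition star_alloc :: "(pt \<Rightarrow> real) \<Rightarrow> real \<Rightarrow> pt \<Rightarrow> real \<Rightarrow> pt \<Rightarrow> alloc" where
  "star_alloc F c h \<mu> m =
    (if m \<in> R_s F c h then
       \<lparr>a_s = 1, a_b = 0, a_t = 0, m_s = \<mu>, m_b = 0, m_t = 0\<rparr>
     else if m \<in> R_b F c h then
       \<lparr>a_s = 0, a_b = 1, a_t = 0, m_s = \<mu> - nn F c m, m_b = nn F c m, m_t = 0\<rparr>
     else
       \<lparr>a_s = 0, a_b = 0, a_t = 1, m_s = \<mu> - 1 / nn F c h, m_b = 0, m_t = 1 / nn F c h\<rparr>)"

end

theory Submission imports Defs begin

lemma mem_cbox2: "(y::pt) \<in> cbox a b \<longleftrightarrow> fst a \<le> fst y \<and> fst y \<le> fst b \<and> snd a \<le> snd y \<and> snd y \<le> snd b"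
  by (cases a, cases b, cases y) (auto simp: cbox_Pair_eq)
lemma mem_box2: "(x::pt) \<in> box (a,b) (c,d) \<longleftrightarrow> a < fst x \<and> fst x < c \<and> b < snd x \<and> snd x < d"
  by (cases x) (auto simp: mem_box Basis_prod_def)

lemma F_int_le:
  assumes cdf: "cdf_with_full_support_density F f" and x: "x \<in> unit_sq"
    and S: "S \<subseteq> cbox (0,0) x" and fi: "f integrable_on S"
  shows "integral S f \<le> F x"
proof -
  have hi: "(f has_integral F x) (cbox (0,0) x)" using cdf x unfolding cdf_with_full_support_density_def by blast
  have sub: "cbox (0,0) x \<subseteq> unit_sq" using x unfolding unit_sq_def by (auto simp: mem_cbox2)
  have "integral S f \<le> integral (cbox (0,0) x) f"
    apply (rule integral_subset_le[OF S fi])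
    using hi sub cdf unfolding cdf_with_full_support_density_def by blast+
  also have "\<dots> = F x" using hi by (simp add: integral_unique)
  finally show ?thesis .
qed

lemma F_nonneg:
  assumes cdf: "cdf_with_full_support_density F f" and x: "x \<in> unit_sq"
  shows "0 \<le> F x"
proof -
  have hi: "(f has_integral F x) (cbox (0,0) x)" using cdf x unfolding cdf_with_full_support_density_def by blast
  have sub: "cbox (0,0) x \<subseteq> unit_sq" using x unfolding unit_sq_def by (auto simp: mem_cbox2)
  show ?thesis apply (rule has_integral_nonneg[OF hi])
    using sub cdf unfolding cdf_with_full_support_density_def by blast
qed

lemma F_mono:
  assumes cdf: "cdf_with_full_support_density F f" and x: "x \<in> unit_sq" and y: "y \<in> unit_sq"
    and le: "fst x \<le> fst y" "snd x \<le> snd y"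
  shows "F x \<le> F y"
proof -
  have hi: "(f has_integral F x) (cbox (0,0) x)" using cdf x unfolding cdf_with_full_support_density_def by blast
  have "integral (cbox (0,0) x) f \<le> F y"
    apply (rule F_int_le[OF cdf y])
    using le x hi unfolding unit_sq_def by (auto simp: mem_cbox2)
  then show ?thesis using hi by (simp add: integral_unique)
qed

lemma F_le1:
  assumes cdf: "cdf_with_full_support_density F f" and x: "x \<in> unit_sq"
  shows "F x \<le> 1"
proof -
  have "F x \<le> F (1,1)" apply (rule F_mono[OF cdf x])
    using x unfolding unit_sq_def by (auto simp: mem_cbox2)
  then show ?thesis using cdf unfolding cdf_with_full_support_density_def by simp
qed

lemma F_pos:
  assumes cdf: "cdf_with_full_support_density F f" and h: "h \<in> open_unit_sq"
  shows "0 < F h"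
proof -
  define e where "e = min (fst h) (snd h)"
  have e: "e > 0" using h unfolding e_def open_unit_sq_def by (auto simp: mem_box2)
  have z: "(0,0) \<in> unit_sq" unfolding unit_sq_def by (auto simp: mem_cbox2)
  define S where "S = cball (0,0) e \<inter> unit_sq"
  have pos: "integral S f > 0" using cdf z e unfolding cdf_with_full_support_density_def S_def by blast
  then have fi: "f integrable_on S" using not_integrable_integral by force
  have hu: "h \<in> unit_sq" using h unfolding unit_sq_def open_unit_sq_def by (auto simp: mem_cbox2 mem_box2)
  have "S \<subseteq> cbox (0,0) h"
  proof
    fix y assume y: "y \<in> S"
    then have n: "norm y \<le> e" "0 \<le> fst y" "0 \<le> snd y" unfolding S_def unit_sq_def
      by (auto simp: mem_cbox2 dist_norm simp flip: zero_prod_def)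
    have "norm (fst y) \<le> norm y" "norm (snd y) \<le> norm y"
      using norm_fst_le[of "fst y" "snd y"] norm_snd_le[of "snd y" "fst y"] by simp_all
    then show "y \<in> cbox (0,0) h" using n unfolding e_def by (auto simp: mem_cbox2)
  qed
  then have "integral S f \<le> F h" using F_int_le[OF cdf hu _ fi] by blast
  then show ?thesis using pos by linarith
qed

lemma F_lt1_snd:
  assumes cdf: "cdf_with_full_support_density F f" and t: "0 \<le> t" "t < 1"
  shows "F (1,t) < 1"
proof -
  define e where "e = (1 - t) / 2"
  have e: "e > 0" using t unfolding e_def by auto
  have z: "(1,1) \<in> unit_sq" unfolding unit_sq_def by (auto simp: mem_cbox2)
  have tu: "(1,t) \<in> unit_sq" using t unfolding unit_sq_def by (auto simp: mem_cbox2)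
  define S where "S = cball (1,1) e \<inter> unit_sq"
  define C where "C = cbox (0,0) (1::real,t)"
  have pos: "integral S f > 0" using cdf z e unfolding cdf_with_full_support_density_def S_def by blast
  then have fi: "f integrable_on S" using not_integrable_integral by force
  have hC: "(f has_integral F (1,t)) C" using cdf tu unfolding cdf_with_full_support_density_def C_def by blast
  have disj: "S \<inter> C = {}"
  proof (rule ccontr)
    assume "S \<inter> C \<noteq> {}"
    then obtain y where y: "y \<in> S" "y \<in> C" by blast
    then have n: "norm ((1,1) - y) \<le> e" "snd y \<le> t" unfolding S_def C_def by (auto simp: mem_cbox2 dist_norm)
    have eq: "(1,1) - y = (1 - fst y, 1 - snd y)" by (cases y) simp
    have "\<bar>1 - snd y\<bar> \<le> norm ((1,1) - y)" using norm_snd_le[of "1 - snd y" "1 - fst y"] unfolding eq real_norm_def .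
    then have "\<bar>1 - snd y\<bar> \<le> e" using n by linarith
    then show False using n t unfolding e_def by auto
  qed
  have U: "(f has_integral (integral S f + F (1,t))) (S \<union> C)"
    by (rule has_integral_Un[OF integrable_integral[OF fi] hC]) (simp add: disj)
  have sub: "S \<union> C \<subseteq> unit_sq" unfolding S_def C_def unit_sq_def using t by (auto simp: mem_cbox2)
  have hu0: "(f has_integral F (1,1)) (cbox (0,0) (1,1))" using cdf z unfolding cdf_with_full_support_density_def by blast
  have F11: "F (1,1) = 1" using cdf unfolding cdf_with_full_support_density_def by blast
  have hu: "(f has_integral 1) unit_sq" using hu0 F11 unfolding unit_sq_def by simp
  have "integral (S \<union> C) f \<le> integral unit_sq f"
    apply (rule integral_subset_le[OF sub])
    using U hu cdf unfolding cdf_with_full_support_density_def by blast+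
  then have "integral S f + F (1,t) \<le> 1" using U hu by (simp add: integral_unique)
  then show ?thesis using pos by linarith
qed

lemma F_lt1_fst:
  assumes cdf: "cdf_with_full_support_density F f" and t: "0 \<le> t" "t < 1"
  shows "F (t,1) < 1"
proof -
  define e where "e = (1 - t) / 2"
  have e: "e > 0" using t unfolding e_def by auto
  have z: "(1,1) \<in> unit_sq" unfolding unit_sq_def by (auto simp: mem_cbox2)
  have tu: "(t,1) \<in> unit_sq" using t unfolding unit_sq_def by (auto simp: mem_cbox2)
  define S where "S = cball (1,1) e \<inter> unit_sq"
  define C where "C = cbox (0,0) (t,1::real)"
  have pos: "integral S f > 0" using cdf z e unfolding cdf_with_full_support_density_def S_def by blast
  then have fi: "f integrable_on S" using not_integrable_integral by force
  have hC: "(f has_integral F (t,1)) C" using cdf tu unfolding cdf_with_full_support_density_def C_def by blast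
  have disj: "S \<inter> C = {}"
  proof (rule ccontr)
    assume "S \<inter> C \<noteq> {}"
    then obtain y where y: "y \<in> S" "y \<in> C" by blast
    then have n: "norm ((1,1) - y) \<le> e" "fst y \<le> t" unfolding S_def C_def by (auto simp: mem_cbox2 dist_norm)
    have eq: "(1,1) - y = (1 - fst y, 1 - snd y)" by (cases y) simp
    have "\<bar>1 - fst y\<bar> \<le> norm ((1,1) - y)" using norm_fst_le[of "1 - fst y" "1 - snd y"] unfolding eq real_norm_def .
    then have "\<bar>1 - fst y\<bar> \<le> e" using n by linarith
    then show False using n t unfolding e_def by auto
  qed
  have U: "(f has_integral (integral S f + F (t,1))) (S \<union> C)"
    by (rule has_integral_Un[OF integrable_integral[OF fi] hC]) (simp add: disj)
  have sub: "S \<union> C \<subseteq> unit_sq" unfolding S_def C_def unit_sq_def using t by (auto simp: mem_cbox2)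
  have hu0: "(f has_integral F (1,1)) (cbox (0,0) (1,1))" using cdf z unfolding cdf_with_full_support_density_def by blast
  have F11: "F (1,1) = 1" using cdf unfolding cdf_with_full_support_density_def by blast
  have hu: "(f has_integral 1) unit_sq" using hu0 F11 unfolding unit_sq_def by simp
  have "integral (S \<union> C) f \<le> integral unit_sq f"
    apply (rule integral_subset_le[OF sub])
    using U hu cdf unfolding cdf_with_full_support_density_def by blast+
  then have "integral S f + F (t,1) \<le> 1" using U hu by (simp add: integral_unique)
  then show ?thesis using pos by linarith
qed


lemma output_eq:
  assumes fe: "feasible F c h \<mu> m A" and nh: "nn F c h \<noteq> 0"
  shows "total_output F c h m A = \<mu> * F m + a_s A * wt_s F h + a_b A * wt_b F c h m + a_t A * wt_t F c h m"
proof -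
  have ms: "m_s A = \<mu> - a_b A * nn F c m - a_t A / nn F c h" using fe unfolding feasible_def by auto
  show ?thesis
  proof (cases "F m = 1")
    case True
    then have "a_b A = 0" using fe unfolding feasible_def by auto
    then show ?thesis unfolding total_output_def ms wt_s_def wt_b_def wt_t_def using True nh
      by (simp add: field_simps)
  next
    case False
    then show ?thesis unfolding total_output_def ms wt_s_def wt_b_def wt_t_def using nh
      by (simp add: field_simps)
  qed
qed

theorem mainTheorem7:
  fixes F f :: "real \<times> real \<Rightarrow> real" and c \<mu> :: real and h m :: "real \<times> real"
  assumes cdf: "cdf_with_full_support_density F f"
    and c: "0 < c" "c < 1"
    and h: "h \<in> open_unit_sq"
    and mu: "\<mu> > 0"
    and abundance: "\<mu> > max (1 / (c * (1 - F (1, snd h)))) (1 / (c * (1 - F (fst h, 1))))"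
    and m: "m \<in> unit_sq"
  shows "(\<exists>A w r. equilibrium F c h \<mu> m A w r) \<and>
         (\<forall>A w r. equilibrium F c h \<mu> m A w r \<longrightarrow>
              (\<forall>A'. feasible F c h \<mu> m A' \<longrightarrow> total_output F c h m A' \<le> total_output F c h m A) \<and>
              r = F m \<and>
              w = max (wt_s F h) (max (wt_b F c h m) (wt_t F c h m))) \<and>
         equilibrium F c h \<mu> m (star_alloc F c h \<mu> m)
              (max (wt_s F h) (max (wt_b F c h m) (wt_t F c h m))) (F m)"
proof -
  obtain h1 h2 where hh: "h = (h1,h2)" by (cases h)
  have h12: "0 < h1" "h1 < 1" "0 < h2" "h2 < 1" using h hh unfolding open_unit_sq_def by (auto simp: mem_box2)
  have hu: "h \<in> unit_sq" using h12 hh unfolding unit_sq_def by (simp add: mem_cbox2)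
  have m01: "0 \<le> fst m" "fst m \<le> 1" "0 \<le> snd m" "snd m \<le> 1" using m unfolding unit_sq_def by (auto simp: mem_cbox2)
  have u1: "(1,h2) \<in> unit_sq" "(h1,1) \<in> unit_sq" using h12 unfolding unit_sq_def by (auto simp: mem_cbox2)
  have A1: "F (1,h2) < 1" by (rule F_lt1_snd[OF cdf]) (use h12 in auto)
  have A2: "F (h1,1) < 1" by (rule F_lt1_fst[OF cdf]) (use h12 in auto)
  have A1n: "0 \<le> F (1,h2)" by (rule F_nonneg[OF cdf u1(1)])
  have A2n: "0 \<le> F (h1,1)" by (rule F_nonneg[OF cdf u1(2)])
  have Fhpos: "0 < F h" by (rule F_pos[OF cdf h])
  have Fhle: "F h \<le> F (1,h2)" by (rule F_mono[OF cdf hu u1(1)]) (use h12 hh in auto)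
  have Fhlt: "F h < 1" using Fhle A1 by linarith
  have Fm0: "0 \<le> F m" "F m \<le> 1" using F_nonneg[OF cdf m] F_le1[OF cdf m] by auto
  have d1: "0 < c*(1 - F(1,h2))" "c*(1-F(1,h2)) \<le> 1" using c A1 A1n by (auto simp: mult_le_one)
  have d2: "0 < c*(1 - F(h1,1))" "c*(1-F(h1,1)) \<le> 1" using c A2 A2n by (auto simp: mult_le_one)
  have mu_gt: "\<mu> > 1/(c*(1-F(1,h2)))" "\<mu> > 1/(c*(1-F(h1,1)))" using abundance hh by auto
  have "1 \<le> 1/(c*(1-F(1,h2)))" using d1 by (simp add: field_simps)
  then have mu1: "\<mu> > 1" using mu_gt by linarith
  have nh_pos: "nn F c h > 0" unfolding nn_def using c Fhlt by auto
  have nh_ne: "nn F c h \<noteq> 0" using nh_pos by simp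
  have inv_nh: "1 / nn F c h = c * (1 - F h)" unfolding nn_def by simp
  have "c * (1 - F h) \<le> c * 1" using c Fhpos by (intro mult_left_mono) auto
  moreover have "0 < c * (1 - F h)" using c Fhlt by simp
  ultimately have inv_nh_lt: "1 / nn F c h < 1" "0 < 1 / nn F c h" unfolding inv_nh using c
    by linarith+
  have nm_ge1: "1 \<le> nn F c m" if "F m < 1"
  proof -
    have "0 < c*(1-F m)" "c*(1 - F m) \<le> 1" using c that Fm0 by (auto simp: mult_le_one)
    then show ?thesis unfolding nn_def by (simp add: field_simps)
  qed
  have key: "F m < 1 \<and> nn F c m < \<mu>" if nd: "\<not> (h1 \<le> fst m \<and> h2 \<le> snd m)"
  proof (cases "snd m < h2")
    case True
    have le: "F m \<le> F (1,h2)" by (rule F_mono[OF cdf m u1(1)]) (use True m01 in auto)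
    then have lt: "F m < 1" using A1 by linarith
    have "1/(c*(1-F m)) \<le> 1/(c*(1-F(1,h2)))"
      apply (rule divide_left_mono)
      using le c d1 lt by (auto intro: mult_pos_pos mult_left_mono)
    then show ?thesis using lt mu_gt unfolding nn_def by linarith
  next
    case False
    then have T: "fst m < h1" using nd by auto
    have le: "F m \<le> F (h1,1)" by (rule F_mono[OF cdf m u1(2)]) (use T m01 in auto)
    then have lt: "F m < 1" using A2 by linarith
    have "1/(c*(1-F m)) \<le> 1/(c*(1-F(h1,1)))"
      apply (rule divide_left_mono)
      using le c d2 lt by (auto intro: mult_pos_pos mult_left_mono)
    then show ?thesis using lt mu_gt unfolding nn_def by linarith
  qed
  have dom: "Fplus F m h = F m" if "h1 \<le> fst m \<and> h2 \<le> snd m"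
  proof -
    have "meet m h = h" using that hh unfolding meet_def by auto
    then show ?thesis unfolding Fplus_def by simp
  qed
  have PT: "profit_t F c h m w (F m) = nn F c h * (wt_t F c h m - w)" for w
    unfolding profit_t_def wt_t_def using nh_ne by (simp add: field_simps)
  have PB: "profit_b F c h m w (F m) = wt_b F c h m - w" if "F m < 1" for w
    unfolding profit_b_def wt_b_def using that by (simp add: algebra_simps)
  have PT_le: "profit_t F c h m w (F m) \<le> 0 \<longleftrightarrow> wt_t F c h m \<le> w" for w
    unfolding PT using nh_pos by (simp add: mult_le_0_iff)
  have PT_eq: "profit_t F c h m w (F m) = 0 \<longleftrightarrow> wt_t F c h m = w" for w
    unfolding PT using nh_ne by simp
  define W where "W = max (wt_s F h) (max (wt_b F c h m) (wt_t F c h m))"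
  have Wge: "wt_s F h \<le> W" "wt_b F c h m \<le> W" "wt_t F c h m \<le> W" unfolding W_def by auto
  have Wpos: "0 \<le> W" using Wge Fhpos unfolding wt_s_def by linarith
  have P3: "equilibrium F c h \<mu> m (star_alloc F c h \<mu> m) W (F m)"
  proof -
    have common: "W \<ge> 0" "F m \<ge> 0" "profit_sh F h W \<le> 0" "profit_sm F m (F m) \<le> 0"
      "F m < 1 \<longrightarrow> profit_b F c h m W (F m) \<le> 0" "profit_t F c h m W (F m) \<le> 0"
      "profit_sm F m (F m) = 0"
      using Wpos Fm0 Wge PB PT_le unfolding profit_sh_def profit_sm_def wt_s_def by auto
    show ?thesis
    proof (cases "m \<in> R_s F c h")
      case True
      then have "W = wt_s F h" using m unfolding R_s_def W_def by auto
      then have "profit_sh F h W = 0" unfolding profit_sh_def wt_s_def by simp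
      then show ?thesis using True common mu unfolding equilibrium_def feasible_def star_alloc_def by auto
    next
      case nS: False
      show ?thesis
      proof (cases "m \<in> R_b F c h")
        case True
        then have wb: "wt_b F c h m > max (wt_s F h) (wt_t F c h m)" using m unfolding R_b_def by auto
        then have WW: "W = wt_b F c h m" unfolding W_def by auto
        have Fm1: "F m < 1" using wb Fhpos Fm0 unfolding wt_b_def wt_s_def by (cases "F m = 1") auto
        have nd: "\<not> (h1 \<le> fst m \<and> h2 \<le> snd m)"
        proof
          assume "h1 \<le> fst m \<and> h2 \<le> snd m"
          then have "wt_b F c h m = 0" using dom unfolding wt_b_def by simp
          then show False using wb Fhpos unfolding wt_s_def by auto
        qed
        have "nn F c m < \<mu>" using key[OF nd] by simp
        moreover have "profit_b F c h m W (F m) = 0" using PB[OF Fm1] WW by simp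
        moreover have "nn F c m \<ge> 0" using nm_ge1[OF Fm1] by simp
        ultimately show ?thesis using True nS common Fm1 unfolding equilibrium_def feasible_def star_alloc_def
          by auto
      next
        case nB: False
        have n1: "\<not> (wt_s F h \<ge> max (wt_b F c h m) (wt_t F c h m))" using nS m unfolding R_s_def by auto
        have n2: "\<not> (wt_b F c h m > max (wt_s F h) (wt_t F c h m))" using nB m unfolding R_b_def by auto
        have WW: "W = wt_t F c h m" using n1 n2 unfolding W_def by auto
        have "profit_t F c h m W (F m) = 0" using PT_eq WW by simp
        moreover have "1 / nn F c h \<le> \<mu>" "0 \<le> 1 / nn F c h" using inv_nh_lt mu1 by linarith+
        ultimately show ?thesis using nB nS common unfolding equilibrium_def feasible_def star_alloc_def
          by auto
      qed
    qed
  qed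
  have P2: "(\<forall>A'. feasible F c h \<mu> m A' \<longrightarrow> total_output F c h m A' \<le> total_output F c h m A) \<and> r = F m \<and> w = W"
    if eq: "equilibrium F c h \<mu> m A w r" for A w r
  proof -
    have fe: "feasible F c h \<mu> m A" using eq unfolding equilibrium_def by auto
    have nn0: "a_s A \<ge> 0" "a_b A \<ge> 0" "a_t A \<ge> 0" "m_s A \<ge> 0"
      "a_s A + a_b A + a_t A = 1" "m_s A + a_b A * nn F c m + a_t A / nn F c h = \<mu>"
      "F m = 1 \<longrightarrow> a_b A = 0"
      using fe unfolding feasible_def by auto
    have wr: "F h \<le> w" "F m \<le> r" using eq unfolding equilibrium_def profit_sh_def profit_sm_def by auto
    have ms: "m_s A > 0"
    proof (rule ccontr)
      assume "\<not> m_s A > 0"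
      then have ms0: "m_s A = 0" using nn0 by simp
      have at: "a_t A / nn F c h \<le> 1 / nn F c h"
        using nn0 inv_nh_lt by (simp add: divide_right_mono)
      show False
      proof (cases "a_b A = 0")
        case True
        then show False using nn0 ms0 at inv_nh_lt mu1 by simp
      next
        case False
        then have ab: "a_b A > 0" using nn0 by simp
        have Fm1: "F m < 1" using nn0 False Fm0 by auto
        have pb: "nn F c m * (Fplus F m h - r) - w = 0"
          using eq ab unfolding equilibrium_def profit_b_def by auto
        have nmpos: "nn F c m \<ge> 1" using nm_ge1[OF Fm1] .
        show False
        proof (cases "h1 \<le> fst m \<and> h2 \<le> snd m")
          case True
          then have "nn F c m * (F m - r) \<le> 0" using wr nmpos by (simp add: mult_nonneg_nonpos)
          moreover have "nn F c m * (F m - r) - w = 0" using pb dom[OF True] by simp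
          ultimately show False using wr Fhpos by linarith
        next
          case False
          have k: "nn F c m < \<mu>" using key[OF False] by simp
          have "a_t A / nn F c h \<le> a_t A * nn F c m"
          proof -
            have "a_t A / nn F c h = a_t A * (1 / nn F c h)" by simp
            also have "\<dots> \<le> a_t A * nn F c m"
              apply (rule mult_left_mono) using nn0(3) inv_nh_lt(1) nmpos by linarith+
            finally show ?thesis .
          qed
          then have "\<mu> \<le> (a_b A + a_t A) * nn F c m" using nn0 ms0 by (simp add: algebra_simps)
          also have "\<dots> \<le> 1 * nn F c m" using nn0 nmpos by (intro mult_right_mono) auto
          finally show False using k by simp
        qed
      qed
    qed
    have r: "r = F m" using eq ms unfolding equilibrium_def profit_sm_def by auto
    have ptle: "profit_t F c h m w (F m) \<le> 0" using eq r unfolding equilibrium_def by auto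
    have wge: "wt_s F h \<le> w" "wt_t F c h m \<le> w" "wt_b F c h m \<le> w"
    proof -
      show "wt_s F h \<le> w" using wr unfolding wt_s_def by simp
      show "wt_t F c h m \<le> w" using ptle PT_le by simp
      show "wt_b F c h m \<le> w"
      proof (cases "F m = 1")
        case True then show ?thesis using wr Fhpos unfolding wt_b_def by simp
      next
        case False
        then have "F m < 1" using Fm0 by simp
        then show ?thesis using eq r PB unfolding equilibrium_def by auto
      qed
    qed
    have ws: "a_s A > 0 \<Longrightarrow> w = wt_s F h" using eq unfolding equilibrium_def profit_sh_def wt_s_def by auto
    have wb: "a_b A > 0 \<Longrightarrow> w = wt_b F c h m"
    proof -
      assume a: "a_b A > 0"
      then have "F m < 1" using nn0 Fm0 by auto
      then show "w = wt_b F c h m" using eq r a PB unfolding equilibrium_def by auto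
    qed
    have wt: "a_t A > 0 \<Longrightarrow> w = wt_t F c h m" using eq r PT_eq unfolding equilibrium_def by auto
    have wW: "w = W"
    proof -
      have "w \<ge> W" using wge unfolding W_def by auto
      moreover have "w \<le> W"
      proof (cases "a_s A > 0")
        case True then show ?thesis using ws Wge by simp
      next
        case F1: False
        show ?thesis
        proof (cases "a_b A > 0")
          case True then show ?thesis using wb Wge by simp
        next
          case False
          then have "a_t A > 0" using F1 nn0 by linarith
          then show ?thesis using wt Wge by simp
        qed
      qed
      ultimately show ?thesis by simp
    qed
    have sA: "a_s A * wt_s F h + a_b A * wt_b F c h m + a_t A * wt_t F c h m = W"
    proof -
      have "a_s A * wt_s F h = a_s A * W" using ws wW nn0 by (cases "a_s A > 0") auto
      moreover have "a_b A * wt_b F c h m = a_b A * W" using wb wW nn0 by (cases "a_b A > 0") auto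
      moreover have "a_t A * wt_t F c h m = a_t A * W" using wt wW nn0 by (cases "a_t A > 0") auto
      moreover have "a_s A * W + a_b A * W + a_t A * W = W" using nn0(5) by (metis distrib_right mult_1)
      ultimately show ?thesis by linarith
    qed
    have opt: "total_output F c h m A' \<le> total_output F c h m A" if fe': "feasible F c h \<mu> m A'" for A'
    proof -
      have n': "a_s A' \<ge> 0" "a_b A' \<ge> 0" "a_t A' \<ge> 0" "a_s A' + a_b A' + a_t A' = 1"
        using fe' unfolding feasible_def by auto
      have "a_s A' * wt_s F h + a_b A' * wt_b F c h m + a_t A' * wt_t F c h m
            \<le> a_s A' * W + a_b A' * W + a_t A' * W"
        using n' Wge by (intro add_mono mult_left_mono) auto
      also have "\<dots> = W" using n' by (metis distrib_right mult_1)
      finally show ?thesis using output_eq[OF fe' nh_ne] output_eq[OF fe nh_ne] sA by linarith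
    qed
    show ?thesis using opt r wW by blast
  qed
  show ?thesis using P2 P3 unfolding W_def by blast
qed

end
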